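(* Fix a reflection matrix $\mathbf\Phi$ and let $(\{\mathbf W_k^\star\}_{k\in\mathcal K},\mathbf R_0^\star)$ be an optimal solution of problem (SDR1.2). Define, for each $k\in\mathcal K$, $$\mathbf w_k^{\mathrm{opt,I}}=(\mathbf h_k^H\mathbf W_k^\star\mathbf h_k)^{-1/2}\,\mathbf W_k^\star\mathbf h_k,\qquad \mathbf R_0^{\mathrm{opt,I}}=\mathbf R_0^\star+\sum_{k\in\mathcal K}\mathbf W_k^\star-\sum_{k\in\mathcal K}\mathbf w_k^{\mathrm{opt,I}}(\mathbf w_k^{\mathrm{opt,I}})^H .$$ Then $\mathbf h_k^H\mathbf W_k^\star\mathbf h_k>0$ for all $k$ (so these are well defined), $\mathbf R_0^{\mathrm{opt,I}}\succeq\mathbf 0$, and $(\{\mathbf w_k^{\mathrm{opt,I}}\},\mathbf R_0^{\mathrm{opt,I}})$ is an optimal solution of problem (P1.1). In particular the relaxation is tight: (P1.1) and (SDR1.2) have the same optimal value.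
   Context: Let $M,N,K\ge1$ be integers and $\mathcal K=\{1,\dots,K\}$. Fixed data: $\mathbf G\in\mathbb C^{N\times M}$, $\mathbf h_{\mathrm d,k}\in\mathbb C^{M}$ and $\mathbf h_{\mathrm r,k}\in\mathbb C^{N}$ for $k\in\mathcal K$, thresholds $\Gamma_k>0$, noise powers $\sigma_k^2>0$, and a power budget $P_0>0$. A reflection matrix is $\mathbf\Phi=\mathrm{diag}(\mathbf v)$ with $\mathbf v\in\mathbb C^N$, $|v_n|=1$ for all $n$. For a given $\mathbf\Phi$ put $\mathbf h_k=\mathbf h_{\mathrm d,k}+\mathbf G^H\mathbf\Phi^H\mathbf h_{\mathrm r,k}$ and $\mathbf H_k=\mathbf h_k\mathbf h_k^H$. For $\mathbf w_1,\dots,\mathbf w_K\in\mathbb C^M$ and Hermitian $\mathbf R_0\succeq\mathbf 0$ in $\mathbb C^{M\times M}$, the Type-I SINR of user $k$ is $$\gamma_k^{\mathrm I}=\frac{|\mathbf h_k^H\mathbf w_k|^2}{\sum_{i\ne k}|\mathbf h_k^H\mathbf w_i|^2+\mathbf h_k^H\mathbf R_0\mathbf h_k+\sigma_k^2},$$ and the power constraint is $\sum_{k}\|\mathbf w_k\|^2+\mathrm{tr}(\mathbf R_0)\le P_0$. For Hermitian $\mathbf X\succeq\mathbf 0$ define $f(\mathbf X)=\mathrm{tr}\big((\mathbf G\mathbf X\mathbf G^H)^{-1}\big)$ if $\mathbf G\mathbf X\mathbf G^H$ is invertible and $f(\mathbf X)=+\infty$ otherwise. Problem (P1.1) (for fixed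 $\mathbf\Phi$): minimize $f\big(\sum_k\mathbf w_k\mathbf w_k^H+\mathbf R_0\big)$ over $\mathbf w_k\in\mathbb C^M$, $\mathbf R_0\succeq\mathbf 0$, subject to $\gamma_k^{\mathrm I}\ge\Gamma_k$ for all $k$ and the power constraint. Problem (SDR1.2) (for fixed $\mathbf\Phi$): minimize $f\big(\sum_k\mathbf W_k+\mathbf R_0\big)$ over Hermitian $\mathbf W_k\succeq\mathbf 0$ ($k\in\mathcal K$) and $\mathbf R_0\succeq\mathbf 0$, subject to $(1+\tfrac1{\Gamma_k})\mathrm{tr}(\mathbf H_k\mathbf W_k)-\mathrm{tr}\big(\mathbf H_k(\sum_{i}\mathbf W_i+\mathbf R_0)\big)\ge\sigma_k^2$ for all $k$, and $\sum_k\mathrm{tr}(\mathbf W_k)+\mathrm{tr}(\mathbf R_0)\le P_0$. *)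

theory Defs
  imports "HOL-Analysis.Analysis"
begin

text \<open>Complex matrices are rendered as complex^'c^'r (rows indexed by 'r, columns by 'c).
  Index types: 'm = BS antennas (M), 'n = RIS elements (N), 'k = users (K).\<close>

definition cadj :: "complex^'c^'r \<Rightarrow> complex^'r^'c" where
  "cadj A = (\<chi> i j. cnj (A $ j $ i))"

definition cvadj_mult :: "complex^'n \<Rightarrow> complex^'n \<Rightarrow> complex" where
  "cvadj_mult x y = (\<Sum>i\<in>UNIV. cnj (x $ i) * y $ i)"

definition outer :: "complex^'n \<Rightarrow> complex^'n^'n" where
  "outer w = (\<chi> i j. w $ i * cnj (w $ j))"

definition hermitian :: "complex^'n^'n \<Rightarrow> bool" where
  "hermitian A \<longleftrightarrow> cadj A = A"

definition psd :: "complex^'n^'n \<Rightarrow> bool" where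
  "psd A \<longleftrightarrow> hermitian A \<and> (\<forall>x. 0 \<le> Re (cvadj_mult x (A *v x)))"

definition diagm :: "complex^'n \<Rightarrow> complex^'n^'n" where
  "diagm v = (\<chi> i j. if i = j then v $ i else 0)"

text \<open>Effective channel h_k = h_{d,k} + G^H Phi^H h_{r,k}, Phi = diag v.\<close>
definition eff_chan :: "complex^'m^'n \<Rightarrow> complex^'n \<Rightarrow> complex^'m \<Rightarrow> complex^'n \<Rightarrow> complex^'m" where
  "eff_chan G v hdk hrk = hdk + cadj G *v (cadj (diagm v) *v hrk)"

text \<open>Objective f(X) = tr((G X G^H)^{-1}) if invertible, +infinity otherwise.
  (The trace of the inverse of an invertible Hermitian matrix is real; we take its real part.)\<close>
definition fobj :: "complex^'m^'n \<Rightarrow> complex^'m^'m \<Rightarrow> ereal" where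
  "fobj G X = (if invertible (G ** X ** cadj G)
               then ereal (Re (trace (matrix_inv (G ** X ** cadj G))))
               else \<infinity>)"

definition sinr1 :: "complex^'m \<Rightarrow> real \<Rightarrow> ('k::finite \<Rightarrow> complex^'m) \<Rightarrow> complex^'m^'m \<Rightarrow> 'k \<Rightarrow> real" where
  "sinr1 h sigma2 w R0 k =
     (cmod (cvadj_mult h (w k)))\<^sup>2 /
     ((\<Sum>i\<in>UNIV - {k}. (cmod (cvadj_mult h (w i)))\<^sup>2) + Re (cvadj_mult h (R0 *v h)) + sigma2)"

definition feasP11 ::
  "('k::finite \<Rightarrow> complex^'m) \<Rightarrow> ('k \<Rightarrow> real) \<Rightarrow> ('k \<Rightarrow> real) \<Rightarrow> real
     \<Rightarrow> (('k \<Rightarrow> complex^'m) \<times> (complex^'m^'m)) set" where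
  "feasP11 h Gam sigma2 P0 = {(w, R0). psd R0 \<and>
     (\<forall>k. sinr1 (h k) (sigma2 k) w R0 k \<ge> Gam k) \<and>
     (\<Sum>k\<in>UNIV. (norm (w k))\<^sup>2) + Re (trace R0) \<le> P0}"

definition objP11 :: "complex^'m^'n \<Rightarrow> ('k::finite \<Rightarrow> complex^'m) \<times> (complex^'m^'m) \<Rightarrow> ereal" where
  "objP11 G p = fobj G ((\<Sum>k\<in>UNIV. outer (fst p k)) + snd p)"

definition optP11 ::
  "complex^'m^'n \<Rightarrow> ('k::finite \<Rightarrow> complex^'m) \<Rightarrow> ('k \<Rightarrow> real) \<Rightarrow> ('k \<Rightarrow> real) \<Rightarrow> real
     \<Rightarrow> ('k \<Rightarrow> complex^'m) \<times> (complex^'m^'m) \<Rightarrow> bool" where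
  "optP11 G h Gam sigma2 P0 p \<longleftrightarrow> p \<in> feasP11 h Gam sigma2 P0 \<and>
     (\<forall>q\<in>feasP11 h Gam sigma2 P0. objP11 G p \<le> objP11 G q)"

definition feasSDR ::
  "('k::finite \<Rightarrow> complex^'m) \<Rightarrow> ('k \<Rightarrow> real) \<Rightarrow> ('k \<Rightarrow> real) \<Rightarrow> real
     \<Rightarrow> (('k \<Rightarrow> complex^'m^'m) \<times> (complex^'m^'m)) set" where
  "feasSDR h Gam sigma2 P0 = {(W, R0). (\<forall>k. psd (W k)) \<and> psd R0 \<and>
     (\<forall>k. (1 + 1 / Gam k) * Re (trace (outer (h k) ** W k))
          - Re (trace (outer (h k) ** ((\<Sum>i\<in>UNIV. W i) + R0))) \<ge> sigma2 k) \<and>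
     (\<Sum>k\<in>UNIV. Re (trace (W k))) + Re (trace R0) \<le> P0}"

definition objSDR :: "complex^'m^'n \<Rightarrow> ('k::finite \<Rightarrow> complex^'m^'m) \<times> (complex^'m^'m) \<Rightarrow> ereal" where
  "objSDR G p = fobj G ((\<Sum>k\<in>UNIV. fst p k) + snd p)"

definition optSDR ::
  "complex^'m^'n \<Rightarrow> ('k::finite \<Rightarrow> complex^'m) \<Rightarrow> ('k \<Rightarrow> real) \<Rightarrow> ('k \<Rightarrow> real) \<Rightarrow> real
     \<Rightarrow> ('k \<Rightarrow> complex^'m^'m) \<times> (complex^'m^'m) \<Rightarrow> bool" where
  "optSDR G h Gam sigma2 P0 p \<longleftrightarrow> p \<in> feasSDR h Gam sigma2 P0 \<and>
     (\<forall>q\<in>feasSDR h Gam sigma2 P0. objSDR G p \<le> objSDR G q)"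

end

theory Submission
  imports Defs
begin


lemma cv_add: "cvadj_mult x (y + z) = cvadj_mult x y + cvadj_mult x z"
  by (simp add: cvadj_mult_def distrib_left sum.distrib)
lemma cv_diff: "cvadj_mult x (y - z) = cvadj_mult x y - cvadj_mult x z"
  by (simp add: cvadj_mult_def right_diff_distrib sum_subtractf)
lemma cv_smult: "cvadj_mult x (c *s y) = c * cvadj_mult x y"
  by (simp add: cvadj_mult_def sum_distrib_left mult.left_commute)
lemma cv_smult_l: "cvadj_mult (c *s x) y = cnj c * cvadj_mult x y"
  by (simp add: cvadj_mult_def sum_distrib_left mult.assoc)
lemma cv_add_l: "cvadj_mult (x + z) y = cvadj_mult x y + cvadj_mult z y"
  by (simp add: cvadj_mult_def distrib_right sum.distrib)
lemma cv_sum: "cvadj_mult x (sum f S) = (\<Sum>k\<in>S. cvadj_mult x (f k))"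
proof -
  have "cvadj_mult x (sum f S) = (\<Sum>i\<in>UNIV. \<Sum>k\<in>S. cnj (x$i) * f k $ i)"
    by (simp add: cvadj_mult_def sum_distrib_left)
  also have "\<dots> = (\<Sum>k\<in>S. \<Sum>i\<in>UNIV. cnj (x$i) * f k $ i)" by (rule sum.swap)
  also have "\<dots> = (\<Sum>k\<in>S. cvadj_mult x (f k))" by (simp add: cvadj_mult_def)
  finally show ?thesis .
qed
lemma cv_cnj: "cvadj_mult y x = cnj (cvadj_mult x y)"
  by (simp add: cvadj_mult_def mult.commute)

lemma mv_sum: "(sum f S) *v x = (\<Sum>k\<in>S. f k *v x)"
proof -
  have "((sum f S) *v x) $ i = (\<Sum>k\<in>S. f k *v x) $ i" for i
  proof -
    have "((sum f S) *v x) $ i = (\<Sum>j\<in>UNIV. \<Sum>k\<in>S. f k $ i $ j * x $ j)"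
      by (simp add: matrix_vector_mult_def sum_distrib_right)
    also have "\<dots> = (\<Sum>k\<in>S. \<Sum>j\<in>UNIV. f k $ i $ j * x $ j)" by (rule sum.swap)
    also have "\<dots> = (\<Sum>k\<in>S. f k *v x) $ i" by (simp add: matrix_vector_mult_def)
    finally show ?thesis .
  qed
  then show ?thesis by (simp add: vec_eq_iff)
qed

lemma outer_mv: "outer w *v x = cvadj_mult w x *s w"
  by (simp add: vec_eq_iff matrix_vector_mult_def outer_def cvadj_mult_def sum_distrib_left mult_ac)

lemma cv_expand: "cvadj_mult x (A *v y) = (\<Sum>i\<in>UNIV. \<Sum>j\<in>UNIV. cnj (x$i) * A$i$j * y$j)"
  by (simp add: cvadj_mult_def matrix_vector_mult_def sum_distrib_left mult.assoc)

lemma herm_entry: "hermitian A \<Longrightarrow> A$i$j = cnj (A$j$i)"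
  unfolding hermitian_def cadj_def by (metis vec_lambda_beta)

lemma herm_entry': "hermitian A \<Longrightarrow> cnj (A$i$j) = A$j$i"
  using herm_entry[of A j i] by simp

lemma herm_cv: assumes "hermitian A" shows "cvadj_mult x (A *v y) = cnj (cvadj_mult y (A *v x))"
proof -
  have "cnj (cvadj_mult y (A *v x)) = (\<Sum>i\<in>UNIV. \<Sum>j\<in>UNIV. y$i * cnj (A$i$j) * cnj (x$j))"
    by (simp add: cv_expand)
  also have "\<dots> = (\<Sum>j\<in>UNIV. \<Sum>i\<in>UNIV. y$i * cnj (A$i$j) * cnj (x$j))" by (rule sum.swap)
  also have "\<dots> = cvadj_mult x (A *v y)"
    by (simp add: cv_expand herm_entry'[OF assms] mult_ac)
  finally show ?thesis by simp
qed

lemma herm_real: "hermitian A \<Longrightarrow> cvadj_mult x (A *v x) = complex_of_real (Re (cvadj_mult x (A *v x)))"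
  using herm_cv[of A x x] by (metis Reals_cnj_iff complex_is_Real_iff of_real_Re)

lemma trace_outer: "trace (outer h ** W) = cvadj_mult h (W *v h)"
proof -
  have "trace (outer h ** W) = (\<Sum>i\<in>UNIV. \<Sum>k\<in>UNIV. h$i * cnj (h$k) * W$k$i)"
    by (simp add: trace_def matrix_matrix_mult_def outer_def)
  also have "\<dots> = (\<Sum>k\<in>UNIV. \<Sum>i\<in>UNIV. h$i * cnj (h$k) * W$k$i)" by (rule sum.swap)
  also have "\<dots> = cvadj_mult h (W *v h)"
    by (simp add: cvadj_mult_def matrix_vector_mult_def sum_distrib_left mult_ac)
  finally show ?thesis .
qed

lemma trace_sum: "trace (sum f S) = (\<Sum>k\<in>S. trace (f k))"
proof -
  have "trace (sum f S) = (\<Sum>i\<in>UNIV. \<Sum>k\<in>S. f k $ i $ i)" by (simp add: trace_def)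
  also have "\<dots> = (\<Sum>k\<in>S. \<Sum>i\<in>UNIV. f k $ i $ i)" by (rule sum.swap)
  also have "\<dots> = (\<Sum>k\<in>S. trace (f k))" by (simp add: trace_def)
  finally show ?thesis .
qed

lemma trace_outer_norm: "Re (trace (outer w)) = (norm w)\<^sup>2"
proof -
  have "Re (trace (outer w)) = (\<Sum>i\<in>UNIV. (cmod (w$i))\<^sup>2)"
    by (simp add: trace_def outer_def complex_norm_square[symmetric] del: of_real_power)
  then show ?thesis by (simp add: norm_vec_def L2_set_def sum_nonneg)
qed

lemma cadj_add: "cadj (A + B) = cadj A + cadj B" by (simp add: cadj_def vec_eq_iff)
lemma cadj_diff: "cadj (A - B) = cadj A - cadj B" by (simp add: cadj_def vec_eq_iff)
lemma herm_add: "hermitian A \<Longrightarrow> hermitian B \<Longrightarrow> hermitian (A + B)" by (simp add: hermitian_def cadj_add)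
lemma herm_diff: "hermitian A \<Longrightarrow> hermitian B \<Longrightarrow> hermitian (A - B)" by (simp add: hermitian_def cadj_diff)
lemma herm_outer: "hermitian (outer w)" by (simp add: hermitian_def cadj_def outer_def vec_eq_iff)

lemma psd_add: "psd A \<Longrightarrow> psd B \<Longrightarrow> psd (A + B)"
  by (simp add: psd_def herm_add matrix_vector_mult_add_rdistrib cv_add add_nonneg_nonneg)
lemma psd_zero: "psd (0::complex^'n^'n)"
  by (simp add: psd_def hermitian_def cadj_def vec_eq_iff cvadj_mult_def)
lemma psd_sum: "(\<And>k. k \<in> S \<Longrightarrow> psd (f k)) \<Longrightarrow> psd (sum f S)"
  by (induction S rule: infinite_finite_induct) (auto simp: psd_zero psd_add)

lemma cv_outer: "cvadj_mult x (outer w *v x) = complex_of_real ((cmod (cvadj_mult x w))\<^sup>2)"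
proof -
  have "cvadj_mult x (outer w *v x) = cvadj_mult x w * cnj (cvadj_mult x w)"
    by (simp add: outer_mv cv_smult cv_cnj[of w x] mult.commute)
  then show ?thesis by (metis complex_norm_square of_real_power)
qed

lemma mv_smult: "A *v (c *s y) = c *s (A *v (y::complex^'n))"
  by (simp add: vec_eq_iff matrix_vector_mult_def sum_distrib_left mult_ac)

lemma cs_psd:
  assumes W: "psd W" and a: "Re (cvadj_mult h (W *v h)) > 0"
  shows "(cmod (cvadj_mult x (W *v h)))\<^sup>2 \<le> Re (cvadj_mult x (W *v x)) * Re (cvadj_mult h (W *v h))"
proof -
  define a where "a = Re (cvadj_mult h (W *v h))"
  define b where "b = Re (cvadj_mult x (W *v x))"
  define c where "c = cvadj_mult x (W *v h)"
  define n where "n = (cmod c)\<^sup>2"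
  define t where "t = - cnj c / complex_of_real a"
  have H: "hermitian W" using W by (simp add: psd_def)
  have ha: "cvadj_mult h (W *v h) = complex_of_real a" unfolding a_def by (rule herm_real[OF H])
  have hb: "cvadj_mult x (W *v x) = complex_of_real b" unfolding b_def by (rule herm_real[OF H])
  have hc: "cvadj_mult h (W *v x) = cnj c" unfolding c_def using herm_cv[OF H, of h x] by simp
  have cc: "cnj c * c = complex_of_real n" unfolding n_def
    by (metis complex_norm_square mult.commute of_real_power)
  have a0: "a > 0" using a by (simp add: a_def)
  define y where "y = x + t *s h"
  have "0 \<le> Re (cvadj_mult y (W *v y))" using W by (simp add: psd_def)
  also have "cvadj_mult y (W *v y) = complex_of_real b + t * c + cnj t * cnj c + cnj t * t * complex_of_real a"
    unfolding y_def
    by (simp add: matrix_vector_right_distrib mv_smult cv_add cv_add_l cv_smult cv_smult_l ha hb hc c_def[symmetric] algebra_simps)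
  also have "t * c = complex_of_real (- n / a)" unfolding t_def using cc by (simp add: mult.commute)
  also have "cnj t * cnj c = complex_of_real (- n / a)" unfolding t_def using cc by (simp add: mult.commute)
  also have "cnj t * t * complex_of_real a = complex_of_real (n / a)" unfolding t_def using cc a0
    by (simp add: field_simps power2_eq_square)
  finally have "0 \<le> b - n / a" by simp
  then have "n \<le> b * a" using a0 by (simp add: field_simps)
  then show ?thesis by (simp add: n_def c_def b_def a_def)
qed

lemma psd_outer: "psd (outer w)"
  by (simp add: psd_def herm_outer cv_outer)

theorem proposition1:
  fixes G :: "complex^'m^'n"
    and hdir :: "'k::finite \<Rightarrow> complex^'m"
    and hris :: "'k \<Rightarrow> complex^'n"
    and Gam sigma2 :: "'k \<Rightarrow> real"
    and P0 :: real
    and v :: "complex^'n"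
    and Wopt :: "'k \<Rightarrow> complex^'m^'m"
    and Ropt :: "complex^'m^'m"
  defines "h \<equiv> (\<lambda>k. eff_chan G v (hdir k) (hris k))"
  assumes Gam_pos: "\<forall>k. Gam k > 0"
    and sigma_pos: "\<forall>k. sigma2 k > 0"
    and P0_pos: "P0 > 0"
    and unimod: "\<forall>n. cmod (v $ n) = 1"
    and opt: "optSDR G h Gam sigma2 P0 (Wopt, Ropt)"
  shows "let w = (\<lambda>k. complex_of_real (1 / sqrt (Re (cvadj_mult (h k) (Wopt k *v h k))))
                       *s (Wopt k *v h k));
             R = Ropt + (\<Sum>k\<in>UNIV. Wopt k) - (\<Sum>k\<in>UNIV. outer (w k))
         in (\<forall>k. Im (cvadj_mult (h k) (Wopt k *v h k)) = 0 \<and>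
                  Re (cvadj_mult (h k) (Wopt k *v h k)) > 0)
            \<and> psd R
            \<and> optP11 G h Gam sigma2 P0 (w, R)
            \<and> (INF p\<in>feasP11 h Gam sigma2 P0. objP11 G p)
                = (INF p\<in>feasSDR h Gam sigma2 P0. objSDR G p)"
proof -
  define a where "a k = Re (cvadj_mult (h k) (Wopt k *v h k))" for k
  define w where "w = (\<lambda>k. complex_of_real (1 / sqrt (Re (cvadj_mult (h k) (Wopt k *v h k))))
                       *s (Wopt k *v h k))"
  define R where "R = Ropt + (\<Sum>k\<in>UNIV. Wopt k) - (\<Sum>k\<in>UNIV. outer (w k))"
  have wk: "w k = complex_of_real (1 / sqrt (a k)) *s (Wopt k *v h k)" for k
    by (simp add: w_def a_def)
  from opt have feas: "(Wopt,Ropt) \<in> feasSDR h Gam sigma2 P0"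
    and best: "\<forall>q\<in>feasSDR h Gam sigma2 P0. objSDR G (Wopt,Ropt) \<le> objSDR G q"
    by (simp_all add: optSDR_def)
  from feas have Wpsd: "\<And>k. psd (Wopt k)" and Rpsd: "psd Ropt"
    and cons: "\<And>k. (1 + 1 / Gam k) * Re (trace (outer (h k) ** Wopt k))
          - Re (trace (outer (h k) ** ((\<Sum>i\<in>UNIV. Wopt i) + Ropt))) \<ge> sigma2 k"
    and pow: "(\<Sum>k\<in>UNIV. Re (trace (Wopt k))) + Re (trace Ropt) \<le> P0"
    by (auto simp: feasSDR_def)
  have psdnn: "psd A \<Longrightarrow> 0 \<le> Re (cvadj_mult x (A *v x))" for A x by (simp add: psd_def)
  have Tsplit: "Re (trace (outer x ** ((\<Sum>i\<in>UNIV. Wopt i) + Ropt)))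
      = (\<Sum>i\<in>UNIV. Re (cvadj_mult x (Wopt i *v x))) + Re (cvadj_mult x (Ropt *v x))" for x
    by (simp add: trace_outer matrix_vector_mult_add_rdistrib mv_sum cv_add cv_sum)
  have sumrem: "(\<Sum>i\<in>UNIV. f i) = f k + (\<Sum>i\<in>UNIV - {k}. f i)" for f :: "'k \<Rightarrow> real" and k
    by (simp add: sum.remove)
  have cons': "a k / Gam k \<ge> sigma2 k + (\<Sum>i\<in>UNIV. Re (cvadj_mult (h k) (Wopt i *v h k)))
        + Re (cvadj_mult (h k) (Ropt *v h k)) - a k" for k
  proof -
    have e: "(1 + 1 / Gam k) * a k = a k + a k / Gam k" by (simp add: algebra_simps)
    have t: "Re (trace (outer (h k) ** Wopt k)) = a k" by (simp add: trace_outer a_def)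
    show ?thesis using cons[of k] Tsplit[of "h k"] e unfolding t by linarith
  qed
  have apos: "a k > 0" for k
  proof -
    have "(\<Sum>i\<in>UNIV. Re (cvadj_mult (h k) (Wopt i *v h k))) - a k
        = (\<Sum>i\<in>UNIV - {k}. Re (cvadj_mult (h k) (Wopt i *v h k)))"
      using sumrem[of "\<lambda>i. Re (cvadj_mult (h k) (Wopt i *v h k))" k] by (simp add: a_def)
    also have "\<dots> \<ge> 0" by (rule sum_nonneg) (simp add: psdnn Wpsd)
    finally have s0: "0 \<le> (\<Sum>i\<in>UNIV. Re (cvadj_mult (h k) (Wopt i *v h k))) - a k" .
    have r0: "0 \<le> Re (cvadj_mult (h k) (Ropt *v h k))" by (rule psdnn[OF Rpsd])
    have sg: "sigma2 k > 0" using sigma_pos by simp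
    have q: "a k / Gam k > 0" using cons'[of k] s0 r0 sg by linarith
    have g: "Gam k > 0" using Gam_pos by simp
    have "a k = a k / Gam k * Gam k" using g by simp
    also have "\<dots> > 0" using q g by (rule mult_pos_pos)
    finally show ?thesis .
  qed
  have Wh: "cvadj_mult (h k) (Wopt k *v h k) = complex_of_real (a k)" for k
    unfolding a_def by (rule herm_real) (use Wpsd psd_def in auto)
  have part1: "\<forall>k. Im (cvadj_mult (h k) (Wopt k *v h k)) = 0 \<and> Re (cvadj_mult (h k) (Wopt k *v h k)) > 0"
  proof (intro allI conjI)
    fix k
    show "Im (cvadj_mult (h k) (Wopt k *v h k)) = 0" by (subst Wh) simp
    show "Re (cvadj_mult (h k) (Wopt k *v h k)) > 0" using apos[of k] by (simp add: a_def)
  qed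
  have nwk: "(cmod (cvadj_mult (h k) (w k)))\<^sup>2 = a k" for k
  proof -
    have "cvadj_mult (h k) (w k) = complex_of_real (a k / sqrt (a k))"
      by (simp add: wk cv_smult Wh)
    then have "cmod (cvadj_mult (h k) (w k)) = \<bar>a k / sqrt (a k)\<bar>" by (simp only: norm_of_real)
    moreover have "(a k / sqrt (a k))\<^sup>2 = a k" using apos[of k]
      by (simp add: power_divide power2_eq_square)
    ultimately show ?thesis using apos[of k] by (simp add: abs_of_pos)
  qed
  have psdk: "psd (Wopt k - outer (w k))" for k
  proof -
    have H: "hermitian (Wopt k - outer (w k))" using Wpsd[of k]
      by (simp add: psd_def herm_diff herm_outer)
    have "0 \<le> Re (cvadj_mult x ((Wopt k - outer (w k)) *v x))" for x
    proof -
      have cs: "(cmod (cvadj_mult x (Wopt k *v h k)))\<^sup>2 \<le> Re (cvadj_mult x (Wopt k *v x)) * a k"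
        using cs_psd[OF Wpsd[of k], of "h k" x] apos[of k] by (simp add: a_def)
      have "cvadj_mult x (w k) = complex_of_real (1 / sqrt (a k)) * cvadj_mult x (Wopt k *v h k)"
        by (simp add: wk cv_smult)
      then have "cmod (cvadj_mult x (w k)) = cmod (cvadj_mult x (Wopt k *v h k)) / sqrt (a k)"
        using apos[of k] by (simp add: norm_mult norm_divide)
      then have "(cmod (cvadj_mult x (w k)))\<^sup>2 = (cmod (cvadj_mult x (Wopt k *v h k)))\<^sup>2 / a k"
        using apos[of k] by (simp add: power_divide less_imp_le)
      also have "\<dots> \<le> Re (cvadj_mult x (Wopt k *v x))" using cs apos[of k]
        by (simp add: divide_le_eq)
      finally show ?thesis
        by (simp add: matrix_vector_mult_diff_rdistrib cv_diff cv_outer)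
    qed
    then show ?thesis using H by (simp add: psd_def)
  qed
  have Req: "R = Ropt + (\<Sum>k\<in>UNIV. Wopt k - outer (w k))"
    by (simp add: R_def sum_subtractf)
  have psdR: "psd R" unfolding Req by (intro psd_add Rpsd psd_sum psdk)
  have ReR: "Re (cvadj_mult x (R *v x)) = Re (cvadj_mult x (Ropt *v x))
      + (\<Sum>i\<in>UNIV. Re (cvadj_mult x (Wopt i *v x))) - (\<Sum>i\<in>UNIV. (cmod (cvadj_mult x (w i)))\<^sup>2)" for x
    by (simp add: R_def matrix_vector_mult_add_rdistrib matrix_vector_mult_diff_rdistrib mv_sum
        cv_add cv_diff cv_sum cv_outer)
  have sinr: "sinr1 (h k) (sigma2 k) w R k \<ge> Gam k" for k
  proof -
    define D where "D = (\<Sum>i\<in>UNIV - {k}. (cmod (cvadj_mult (h k) (w i)))\<^sup>2)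
       + Re (cvadj_mult (h k) (R *v h k)) + sigma2 k"
    have s1: "(\<Sum>i\<in>UNIV - {k}. (cmod (cvadj_mult (h k) (w i)))\<^sup>2)
        = (\<Sum>i\<in>UNIV. (cmod (cvadj_mult (h k) (w i)))\<^sup>2) - a k"
      using sumrem[of "\<lambda>i. (cmod (cvadj_mult (h k) (w i)))\<^sup>2" k] nwk[of k] by simp
    have Deq: "D = sigma2 k + (\<Sum>i\<in>UNIV. Re (cvadj_mult (h k) (Wopt i *v h k)))
        + Re (cvadj_mult (h k) (Ropt *v h k)) - a k"
      unfolding D_def s1 ReR by linarith
    have Dle: "Gam k * D \<le> a k"
      using cons'[of k] Gam_pos Deq by (simp add: le_divide_eq mult.commute)
    have Dpos: "D > 0"
    proof -
      have "0 \<le> (\<Sum>i\<in>UNIV - {k}. (cmod (cvadj_mult (h k) (w i)))\<^sup>2)" by (simp add: sum_nonneg)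
      moreover have "0 \<le> Re (cvadj_mult (h k) (R *v h k))" by (rule psdnn[OF psdR])
      moreover have "sigma2 k > 0" using sigma_pos by simp
      ultimately show ?thesis unfolding D_def by linarith
    qed
    have "sinr1 (h k) (sigma2 k) w R k = a k / D" by (simp add: sinr1_def D_def nwk)
    then show ?thesis using Dle Dpos by (simp add: le_divide_eq mult.commute)
  qed
  have trR: "Re (trace R) = Re (trace Ropt) + (\<Sum>k\<in>UNIV. Re (trace (Wopt k))) - (\<Sum>k\<in>UNIV. (norm (w k))\<^sup>2)"
    by (simp add: R_def trace_add trace_sub trace_sum trace_outer_norm)
  have powR: "(\<Sum>k\<in>UNIV. (norm (w k))\<^sup>2) + Re (trace R) \<le> P0"
    using trR pow by linarith
  have feasw: "(w, R) \<in> feasP11 h Gam sigma2 P0"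
    unfolding feasP11_def using psdR sinr powR by blast
  have objeq: "objP11 G (w, R) = objSDR G (Wopt, Ropt)"
  proof -
    have "(\<Sum>k\<in>UNIV. outer (w k)) + R = (\<Sum>k\<in>UNIV. Wopt k) + Ropt" by (simp add: R_def)
    then show ?thesis by (simp add: objP11_def objSDR_def)
  qed
  have map: "(\<lambda>k. outer (fst q k), snd q) \<in> feasSDR h Gam sigma2 P0
      \<and> objSDR G (\<lambda>k. outer (fst q k), snd q) = objP11 G q"
    if q: "q \<in> feasP11 h Gam sigma2 P0" for q
  proof -
    obtain w' R' where qe: "q = (w', R')" by (cases q)
    from q have R'psd: "psd R'" and sq: "\<And>k. sinr1 (h k) (sigma2 k) w' R' k \<ge> Gam k"
      and pq: "(\<Sum>k\<in>UNIV. (norm (w' k))\<^sup>2) + Re (trace R') \<le> P0"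
      by (auto simp: feasP11_def qe)
    have c: "(1 + 1 / Gam k) * Re (trace (outer (h k) ** outer (w' k)))
          - Re (trace (outer (h k) ** ((\<Sum>i\<in>UNIV. outer (w' i)) + R'))) \<ge> sigma2 k" for k
    proof -
      define s where "s i = (cmod (cvadj_mult (h k) (w' i)))\<^sup>2" for i
      define D where "D = (\<Sum>i\<in>UNIV - {k}. s i) + Re (cvadj_mult (h k) (R' *v h k)) + sigma2 k"
      have e1: "Re (trace (outer (h k) ** outer (w' k))) = s k"
        by (simp add: trace_outer cv_outer s_def)
      have e2: "Re (trace (outer (h k) ** ((\<Sum>i\<in>UNIV. outer (w' i)) + R')))
          = (\<Sum>i\<in>UNIV. s i) + Re (cvadj_mult (h k) (R' *v h k))"
        by (simp add: trace_outer matrix_vector_mult_add_rdistrib mv_sum cv_add cv_sum cv_outer s_def)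
      have Dpos: "D > 0"
      proof -
        have "0 \<le> (\<Sum>i\<in>UNIV - {k}. s i)" by (simp add: sum_nonneg s_def)
        moreover have "0 \<le> Re (cvadj_mult (h k) (R' *v h k))" by (rule psdnn[OF R'psd])
        moreover have "sigma2 k > 0" using sigma_pos by simp
        ultimately show ?thesis unfolding D_def by linarith
      qed
      have "sinr1 (h k) (sigma2 k) w' R' k = s k / D" by (simp add: sinr1_def D_def s_def)
      then have "Gam k * D \<le> s k" using sq[of k] Dpos by (simp add: le_divide_eq mult.commute)
      then have "D \<le> s k / Gam k" using Gam_pos by (simp add: le_divide_eq mult.commute)
      moreover have "(1 + 1 / Gam k) * s k = s k + s k / Gam k" by (simp add: algebra_simps)
      moreover have "(\<Sum>i\<in>UNIV. s i) = s k + (\<Sum>i\<in>UNIV - {k}. s i)" by (rule sumrem)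
      ultimately show ?thesis unfolding e1 e2 D_def by linarith
    qed
    have "(\<Sum>k\<in>UNIV. Re (trace (outer (w' k)))) + Re (trace R') \<le> P0"
      using pq by (simp add: trace_outer_norm)
    then have f: "(\<lambda>k. outer (fst q k), snd q) \<in> feasSDR h Gam sigma2 P0"
      unfolding feasSDR_def qe fst_conv snd_conv using psd_outer R'psd c by blast
    show ?thesis using f by (simp add: objSDR_def objP11_def qe)
  qed
  have optw: "optP11 G h Gam sigma2 P0 (w, R)"
  proof -
    have "objP11 G (w, R) \<le> objP11 G q" if q: "q \<in> feasP11 h Gam sigma2 P0" for q
    proof -
      have m: "(\<lambda>k. outer (fst q k), snd q) \<in> feasSDR h Gam sigma2 P0"
        and e: "objSDR G (\<lambda>k. outer (fst q k), snd q) = objP11 G q" using map[OF q] by auto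
      have "objSDR G (Wopt, Ropt) \<le> objSDR G (\<lambda>k. outer (fst q k), snd q)"
        using best m by blast
      then show ?thesis using objeq e by simp
    qed
    then show ?thesis unfolding optP11_def using feasw by blast
  qed
  have inf1: "(INF p\<in>feasP11 h Gam sigma2 P0. objP11 G p) = objSDR G (Wopt, Ropt)"
  proof (rule antisym)
    show "(INF p\<in>feasP11 h Gam sigma2 P0. objP11 G p) \<le> objSDR G (Wopt, Ropt)"
      using INF_lower[OF feasw, of "objP11 G"] objeq by simp
    show "objSDR G (Wopt, Ropt) \<le> (INF p\<in>feasP11 h Gam sigma2 P0. objP11 G p)"
      by (rule INF_greatest) (use optw objeq in \<open>simp add: optP11_def\<close>)
  qed
  have inf2: "(INF p\<in>feasSDR h Gam sigma2 P0. objSDR G p) = objSDR G (Wopt, Ropt)"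
  proof (rule antisym)
    show "(INF p\<in>feasSDR h Gam sigma2 P0. objSDR G p) \<le> objSDR G (Wopt, Ropt)"
      by (rule INF_lower[OF feas])
    show "objSDR G (Wopt, Ropt) \<le> (INF p\<in>feasSDR h Gam sigma2 P0. objSDR G p)"
      by (rule INF_greatest) (use best in simp)
  qed
  have "(\<forall>k. Im (cvadj_mult (h k) (Wopt k *v h k)) = 0 \<and> Re (cvadj_mult (h k) (Wopt k *v h k)) > 0)
        \<and> psd R \<and> optP11 G h Gam sigma2 P0 (w, R)
        \<and> (INF p\<in>feasP11 h Gam sigma2 P0. objP11 G p) = (INF p\<in>feasSDR h Gam sigma2 P0. objSDR G p)"
    using part1 psdR optw inf1 inf2 by simp
  note main = this
  show ?thesis
    apply (unfold w_def[symmetric])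
    apply (unfold Let_def)
    apply (unfold R_def[symmetric])
    by (fact main)
qed

end
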